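(* Let $G$ be a graph (loops and multiple edges allowed) of girth $g$. If two closed geodesics of length $g$ in $G$ share a subwalk of length $\lfloor g/2 \rfloor+1$, then they coincide.
   Context: A walk is a finite sequence of oriented edges in which the initial vertex of each edge after the first equals the terminal vertex of the previous one; it is closed if it starts and ends at the same vertex, and closed walks are considered up to cyclic permutation. A walk is geodesic if it never traverses an edge and immediately retraverses it in the opposite direction; a closed geodesic is a closed walk that is locally geodesic (including at the base point). The girth of $G$ is the smallest length of a closed geodesic in $G$. *)

theory Defs
  imports Main
begin

text \<open>A graph with loops and multiple edges is given by a set D of oriented edges
(darts), a map src giving the initial vertex of each dart, and a fixed-point-free
involution opp on D giving the reversed orientation. A loop is a dart e with src e = src (opp e).\<close>

definition graph :: "'d set \<Rightarrow> ('d \<Rightarrow> 'v) \<Rightarrow> ('d \<Rightarrow> 'd) \<Rightarrow> bool" where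
  "graph D src opp \<longleftrightarrow> (\<forall>e\<in>D. opp e \<in> D \<and> opp (opp e) = e \<and> opp e \<noteq> e)"

definition tgt :: "('d \<Rightarrow> 'v) \<Rightarrow> ('d \<Rightarrow> 'd) \<Rightarrow> 'd \<Rightarrow> 'v" where
  "tgt src opp e = src (opp e)"

definition walk :: "'d set \<Rightarrow> ('d \<Rightarrow> 'v) \<Rightarrow> ('d \<Rightarrow> 'd) \<Rightarrow> 'd list \<Rightarrow> bool" where
  "walk D src opp w \<longleftrightarrow> set w \<subseteq> D \<and>
     (\<forall>i. Suc i < length w \<longrightarrow> src (w ! Suc i) = tgt src opp (w ! i))"

text \<open>A closed walk (nonempty, ending where it starts), represented by a list;
closed walks are identified up to cyclic rotation of the list.\<close>
definition closed_walk :: "'d set \<Rightarrow> ('d \<Rightarrow> 'v) \<Rightarrow> ('d \<Rightarrow> 'd) \<Rightarrow> 'd list \<Rightarrow> bool" where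
  "closed_walk D src opp w \<longleftrightarrow> walk D src opp w \<and> w \<noteq> [] \<and>
     src (hd w) = tgt src opp (last w)"

definition closed_geodesic :: "'d set \<Rightarrow> ('d \<Rightarrow> 'v) \<Rightarrow> ('d \<Rightarrow> 'd) \<Rightarrow> 'd list \<Rightarrow> bool" where
  "closed_geodesic D src opp w \<longleftrightarrow> closed_walk D src opp w \<and>
     (\<forall>i < length w. w ! (Suc i mod length w) \<noteq> opp (w ! i))"

definition girth :: "'d set \<Rightarrow> ('d \<Rightarrow> 'v) \<Rightarrow> ('d \<Rightarrow> 'd) \<Rightarrow> nat" where
  "girth D src opp = (LEAST n. \<exists>w. closed_geodesic D src opp w \<and> length w = n)"

definition cyclic_subwalk :: "'d list \<Rightarrow> nat \<Rightarrow> 'd list \<Rightarrow> bool" where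
  "cyclic_subwalk s L c \<longleftrightarrow> L \<le> length c \<and> length s = L \<and> (\<exists>i. s = take L (rotate i c))"

definition same_closed_walk :: "'d list \<Rightarrow> 'd list \<Rightarrow> bool" where
  "same_closed_walk c1 c2 \<longleftrightarrow> (\<exists>k. c2 = rotate k c1)"

end

theory Submission
  imports Defs
begin

lemma cg_fun:
  assumes cg: "closed_geodesic D src opp c"
  shows "\<forall>k. c ! (k mod length c) \<in> D \<and>
     src (c ! (Suc k mod length c)) = tgt src opp (c ! (k mod length c)) \<and>
     c ! (Suc k mod length c) \<noteq> opp (c ! (k mod length c))"
proof
  fix k
  let ?n = "length c"
  define m where "m = k mod ?n"
  have ne: "c \<noteq> []" using cg unfolding closed_geodesic_def closed_walk_def by auto
  have m: "m < ?n" using ne m_def by auto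
  have sm: "Suc k mod ?n = Suc m mod ?n" using m_def by (simp add: mod_Suc_eq)
  have D: "set c \<subseteq> D" and W: "\<forall>i. Suc i < ?n \<longrightarrow> src (c ! Suc i) = tgt src opp (c ! i)"
    and cl: "src (hd c) = tgt src opp (last c)"
    and ng: "\<forall>i < ?n. c ! (Suc i mod ?n) \<noteq> opp (c ! i)"
    using cg unfolding closed_geodesic_def closed_walk_def walk_def by auto
  have "c ! m \<in> D" using D m by auto
  moreover have "src (c ! (Suc m mod ?n)) = tgt src opp (c ! m)"
  proof (cases "Suc m < ?n")
    case True then show ?thesis using W by simp
  next
    case False
    then have e: "Suc m = ?n" "m = ?n - 1" using m by simp_all
    then show ?thesis using cl ne by (simp add: hd_conv_nth last_conv_nth)
  qed
  moreover have "c ! (Suc m mod ?n) \<noteq> opp (c ! m)" using ng m by blast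
  ultimately show "c ! (k mod length c) \<in> D \<and>
     src (c ! (Suc k mod length c)) = tgt src opp (c ! (k mod length c)) \<and>
     c ! (Suc k mod length c) \<noteq> opp (c ! (k mod length c))"
    using sm m_def by simp
qed

lemma core:
  fixes A B :: "nat \<Rightarrow> 'd"
  assumes gr: "graph D src opp"
    and HA: "\<forall>k. A k \<in> D \<and> src (A (Suc k)) = tgt src opp (A k) \<and> A (Suc k) \<noteq> opp (A k)"
    and HB: "\<forall>k. B k \<in> D \<and> src (B (Suc k)) = tgt src opp (B k) \<and> B (Suc k) \<noteq> opp (B k)"
    and PA: "A g = A 0" and PB: "B g = B 0"
    and agree: "\<forall>k<L. A k = B k" and L0: "0 < L" and Lg: "2 * (g - L) < g"
    and minl: "\<forall>w. closed_geodesic D src opp w \<longrightarrow> g \<le> length w"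
  shows "\<forall>k<g. A k = B k"
proof (rule ccontr)
  assume "\<not> (\<forall>k<g. A k = B k)"
  define S where "S = {k. k < g \<and> A k \<noteq> B k}"
  have Sne: "S \<noteq> {}" using \<open>\<not> (\<forall>k<g. A k = B k)\<close> S_def by auto
  have Sfin: "finite S" unfolding S_def by auto
  define i where "i = Min S"
  define j where "j = Max S"
  have iS: "i \<in> S" using Sne Sfin i_def by auto
  have jS: "j \<in> S" using Sne Sfin j_def by auto
  have ij: "i \<le> j" using Sne Sfin i_def j_def iS by auto
  have jg: "j < g" using jS S_def by auto
  have Li: "L \<le> i"
  proof (rule ccontr)
    assume "\<not> L \<le> i"
    then have "A i = B i" using agree by simp
    then show False using iS S_def by simp
  qed
  have i1: "1 \<le> i" using Li L0 by simp
  have belowi: "\<And>k. k < i \<Longrightarrow> A k = B k"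
  proof -
    fix k assume "k < i"
    have "k \<notin> S"
    proof
      assume "k \<in> S"
      then have "i \<le> k" unfolding i_def using Sfin by simp
      then show False using \<open>k < i\<close> by simp
    qed
    then show "A k = B k" using \<open>k < i\<close> ij jg S_def by auto
  qed
  have abovej: "A (Suc j) = B (Suc j)"
  proof (cases "Suc j < g")
    case True
    have "Suc j \<notin> S"
    proof
      assume "Suc j \<in> S"
      then have "Suc j \<le> j" unfolding j_def using Sfin by simp
      then show False by simp
    qed
    then show ?thesis using True S_def by auto
  next
    case False
    then have "Suc j = g" using jg by simp
    then show ?thesis using PA PB agree L0 by simp
  qed
  have oo: "\<And>x. x \<in> D \<Longrightarrow> opp (opp x) = x" using gr unfolding graph_def by auto
  have injo: "x = y" if "x \<in> D" "y \<in> D" "opp x = opp y" for x y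
  proof -
    have "x = opp (opp x)" using oo[OF that(1)] by simp
    also have "... = opp (opp y)" using that(3) by simp
    also have "... = y" using oo[OF that(2)] by simp
    finally show ?thesis .
  qed
  have oD: "\<And>x. x \<in> D \<Longrightarrow> opp x \<in> D" using gr unfolding graph_def by auto
  define n where "n = Suc (j - i)"
  define w where "w = (\<lambda>k. if k < n then A (i + k) else opp (B (j - (k - n))))"
  define W where "W = map w [0..<2*n]"
  have lenW: "length W = 2 * n" unfolding W_def by simp
  have Wn: "\<And>k. k < 2 * n \<Longrightarrow> W ! k = w k" unfolding W_def by simp
  have n1: "1 \<le> n" unfolding n_def by simp
  have nle: "n \<le> g - L" unfolding n_def using jg Li ij by simp
  have wD: "\<And>k. w k \<in> D" unfolding w_def using HA HB oD by auto
  have step: "\<And>k. Suc k < 2 * n \<Longrightarrow> src (w (Suc k)) = tgt src opp (w k) \<and> w (Suc k) \<noteq> opp (w k)"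
  proof -
    fix k assume k: "Suc k < 2 * n"
    show "src (w (Suc k)) = tgt src opp (w k) \<and> w (Suc k) \<noteq> opp (w k)"
    proof (cases "Suc k < n")
      case True
      then show ?thesis unfolding w_def using HA[rule_format, of "i + k"] by simp
    next
      case F: False
      show ?thesis
      proof (cases "Suc k = n")
        case True
        have jj: "i + k = j" using True n_def ij by simp
        have wk: "w k = A j" unfolding w_def using True jj by simp
        have wsk: "w (Suc k) = opp (B j)" unfolding w_def using True by simp
        have "src (opp (B j)) = src (B (Suc j))"
          using HB oo by (simp add: tgt_def)
        also have "... = src (A (Suc j))" using abovej by simp
        also have "... = tgt src opp (A j)" using HA by simp
        finally have e1: "src (w (Suc k)) = tgt src opp (w k)" using wk wsk by simp
        have "opp (B j) \<noteq> opp (A j)" using jS S_def injo[of "B j" "A j"] HA HB by auto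
        then show ?thesis using e1 wk wsk by simp
      next
        case False
        then have kn: "n \<le> k" using F by simp
        define m where "m = j - (k - n)"
        have mi: "i < m" using k kn n_def ij unfolding m_def by simp
        have m1: "j - (Suc k - n) = m - 1" unfolding m_def using kn by simp
        have wk: "w k = opp (B m)" unfolding w_def m_def using kn by simp
        have wsk: "w (Suc k) = opp (B (m - 1))" unfolding w_def using kn m1 by simp
        have sm: "Suc (m - 1) = m" using mi by simp
        have hb: "src (B m) = tgt src opp (B (m - 1)) \<and> B m \<noteq> opp (B (m - 1))"
          using HB[rule_format, of "m - 1"] sm by simp
        have e1: "src (opp (B (m - 1))) = tgt src opp (opp (B m))"
          using hb oo HB by (simp add: tgt_def)
        have "opp (B (m - 1)) \<noteq> opp (opp (B m))"
        proof
          assume "opp (B (m - 1)) = opp (opp (B m))"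
          then have "B (m - 1) = opp (B m)" using injo[of "B (m - 1)" "opp (B m)"] HB oD by simp
          then have "opp (B (m - 1)) = B m" using oo HB by simp
          then show False using hb by simp
        qed
        then show ?thesis using e1 wk wsk by simp
      qed
    qed
  qed
  have w0: "w 0 = A i" unfolding w_def using n1 by simp
  have wl: "w (2 * n - 1) = opp (B i)"
  proof -
    have "\<not> 2 * n - 1 < n" "j - (2 * n - 1 - n) = i" using n1 ij unfolding n_def by auto
    then show ?thesis unfolding w_def by simp
  qed
  have cg: "closed_geodesic D src opp W"
    unfolding closed_geodesic_def closed_walk_def walk_def
  proof (intro conjI allI impI)
    show "set W \<subseteq> D" unfolding W_def using wD by auto
  next
    fix k assume "Suc k < length W"
    then show "src (W ! Suc k) = tgt src opp (W ! k)" using step lenW Wn by simp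
  next
    show "W \<noteq> []" using lenW n1 by auto
  next
    have "src (A i) = tgt src opp (A (i - 1))" using HA[rule_format, of "i - 1"] i1 by simp
    also have "... = tgt src opp (B (i - 1))" using belowi i1 by simp
    also have "... = src (B i)" using HB[rule_format, of "i - 1"] i1 by simp
    also have "... = tgt src opp (opp (B i))" using oo HB by (simp add: tgt_def)
    finally have "src (w 0) = tgt src opp (w (2 * n - 1))" using w0 wl by simp
    moreover have Wne: "W \<noteq> []" using lenW n1 by auto
    moreover have "hd W = w 0" using Wne Wn[of 0] n1 by (simp add: hd_conv_nth)
    moreover have "last W = w (2 * n - 1)" using Wne Wn[of "2 * n - 1"] n1 lenW
      by (simp add: last_conv_nth)
    ultimately show "src (hd W) = tgt src opp (last W)" by simp
  next
    fix k assume k: "k < length W"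
    show "W ! (Suc k mod length W) \<noteq> opp (W ! k)"
    proof (cases "Suc k < length W")
      case True then show ?thesis using step lenW Wn by simp
    next
      case False
      then have kk: "k = 2 * n - 1" "Suc k = length W" using k lenW by auto
      have "A i \<noteq> opp (opp (B i))" using iS S_def oo HB by auto
      then show ?thesis using kk w0 wl Wn n1 lenW by simp
    qed
  qed
  then have "g \<le> 2 * n" using minl lenW by auto
  then show False using nle Lg by simp
qed

theorem lemma2p1:
  fixes D :: "'d set" and src :: "'d \<Rightarrow> 'v" and opp :: "'d \<Rightarrow> 'd"
    and c1 c2 s :: "'d list" and g :: nat
  assumes "graph D src opp"
    and "g = girth D src opp"
    and "closed_geodesic D src opp c1" and "length c1 = g"
    and "closed_geodesic D src opp c2" and "length c2 = g"
    and "cyclic_subwalk s (g div 2 + 1) c1"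
    and "cyclic_subwalk s (g div 2 + 1) c2"
  shows "same_closed_walk c1 c2"
proof -
  let ?L = "g div 2 + 1"
  obtain i1 where i1: "s = take ?L (rotate i1 c1)" and Lg: "?L \<le> g"
    using assms(7,4) unfolding cyclic_subwalk_def by auto
  obtain i2 where i2: "s = take ?L (rotate i2 c2)"
    using assms(8) unfolding cyclic_subwalk_def by auto
  have g0: "0 < g" using assms(3,4) unfolding closed_geodesic_def closed_walk_def by auto
  define A where "A = (\<lambda>k. c1 ! ((k + i1) mod g))"
  define B where "B = (\<lambda>k. c2 ! ((k + i2) mod g))"
  have HA: "\<forall>k. A k \<in> D \<and> src (A (Suc k)) = tgt src opp (A k) \<and> A (Suc k) \<noteq> opp (A k)"
  proof
    fix k show "A k \<in> D \<and> src (A (Suc k)) = tgt src opp (A k) \<and> A (Suc k) \<noteq> opp (A k)"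
      using cg_fun[OF assms(3), rule_format, of "k + i1"] assms(4) unfolding A_def by simp
  qed
  have HB: "\<forall>k. B k \<in> D \<and> src (B (Suc k)) = tgt src opp (B k) \<and> B (Suc k) \<noteq> opp (B k)"
  proof
    fix k show "B k \<in> D \<and> src (B (Suc k)) = tgt src opp (B k) \<and> B (Suc k) \<noteq> opp (B k)"
      using cg_fun[OF assms(5), rule_format, of "k + i2"] assms(6) unfolding B_def by simp
  qed
  have PA: "A g = A 0" unfolding A_def by simp
  have PB: "B g = B 0" unfolding B_def by simp
  have agree: "\<forall>k<?L. A k = B k"
  proof (intro allI impI)
    fix k assume k: "k < ?L"
    have "s ! k = rotate i1 c1 ! k" using i1 k by simp
    also have "... = A k" unfolding A_def using k Lg assms(4) nth_rotate[of k c1 i1]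
      by (simp add: add.commute)
    finally have a: "s ! k = A k" .
    have "s ! k = rotate i2 c2 ! k" using i2 k by simp
    also have "... = B k" unfolding B_def using k Lg assms(6) nth_rotate[of k c2 i2]
      by (simp add: add.commute)
    finally show "A k = B k" using a by simp
  qed
  have Lg2: "2 * (g - ?L) < g"
  proof -
    have "g = 2 * (g div 2) + g mod 2" by simp
    moreover have "g mod 2 < 2" by simp
    ultimately show ?thesis using g0 by linarith
  qed
  have minl: "\<forall>w. closed_geodesic D src opp w \<longrightarrow> g \<le> length w"
    using assms(2) unfolding girth_def by (auto intro: Least_le)
  have all: "\<forall>k<g. A k = B k"
    using core[OF assms(1) HA HB PA PB agree _ Lg2 minl] by simp
  have r: "rotate i1 c1 = rotate i2 c2"
  proof (rule nth_equalityI)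
    show "length (rotate i1 c1) = length (rotate i2 c2)" using assms(4,6) by simp
  next
    fix k assume "k < length (rotate i1 c1)"
    then have k: "k < g" using assms(4) by simp
    then show "rotate i1 c1 ! k = rotate i2 c2 ! k"
      using all nth_rotate[of k c1 i1] nth_rotate[of k c2 i2] assms(4,6)
      unfolding A_def B_def by (metis add.commute)
  qed
  define t where "t = g - i2 mod g"
  have "rotate (t + i1) c1 = rotate (t + i2) c2" using r by (simp add: rotate_rotate[symmetric])
  also have "... = c2"
  proof (rule rotate_id)
    have "i2 mod g < g" using g0 by simp
    then have "(t + i2) mod g = (g + (i2 - i2 mod g)) mod g" unfolding t_def by simp
    also have "... = 0" by (simp add: minus_mod_eq_mult_div)
    finally show "(t + i2) mod length c2 = 0" using assms(6) by simp
  qed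
  finally show ?thesis unfolding same_closed_walk_def by metis
qed

end
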